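(* The manifold $\mathcal M_F$ is locally symmetric (i.e. $\nabla R\equiv0$) if and only if, for each $i$ with $1\le i\le k$ and every $u\in\mathbb R$, either $f_i(u)=0$ or $f_i'(u)=-\tfrac12$.
   Context: Fix an integer $k\ge 1$ and signs $\varepsilon_1,\dots,\varepsilon_k\in\{\pm1\}$. Let $f_1,\dots,f_k:\mathbb R\to\mathbb R$ be smooth, $F=(f_1,\dots,f_k)$. On $\mathbb R^{3k+2}$ with coordinates $(u_0,\dots,u_k,v_0,\dots,v_k,s_1,\dots,s_k)$ let $g_F$ be the symmetric metric whose only nonzero components on coordinate vector fields are (up to symmetry), for $1\le i\le k$ and $0\le i',j\le k$: $g_F(\partial_{u_0},\partial_{u_i})=2f_i(u_i)s_i$, $g_F(\partial_{u_i},\partial_{u_i})=-2u_0s_i$, $g_F(\partial_{u_{i'}},\partial_{v_j})=\delta_{i'j}$, $g_F(\partial_{s_i},\partial_{s_i})=\varepsilon_i$; $\mathcal M_F=(\mathbb R^{3k+2},g_F)$, with Levi-Civita connection $\nabla$ and curvature tensor $R(X,Y,Z,W)=g_F(\nabla_X\nabla_YZ-\nabla_Y\nabla_XZ-\nabla_{[X,Y]}Z,W)$. *)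

theory Defs
  imports "HOL-Analysis.Derivative"
begin

text \<open>Coordinates on R^N are indexed by 0..<N; a point is a function nat => real
(only the first N entries matter).  A (pseudo-)Riemannian metric in coordinates is
a function g x a b giving g(\<partial>_a,\<partial>_b) at the point x.\<close>

definition smooth_fun :: "(real \<Rightarrow> real) \<Rightarrow> bool" where
  "smooth_fun h \<longleftrightarrow> (\<forall>n x. ((deriv :: (real \<Rightarrow> real) \<Rightarrow> real \<Rightarrow> real) ^^ n) h differentiable (at x))"

definition pd :: "nat \<Rightarrow> ((nat \<Rightarrow> real) \<Rightarrow> real) \<Rightarrow> (nat \<Rightarrow> real) \<Rightarrow> real" where
  "pd a h x = deriv (\<lambda>t. h (x(a := t))) (x a)"

definition inv_metric :: "nat \<Rightarrow> ((nat \<Rightarrow> real) \<Rightarrow> nat \<Rightarrow> nat \<Rightarrow> real)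
    \<Rightarrow> (nat \<Rightarrow> real) \<Rightarrow> nat \<Rightarrow> nat \<Rightarrow> real" where
  "inv_metric N g x = (THE h. (\<forall>a<N. \<forall>c<N. (\<Sum>b<N. g x a b * h b c) = (if a = c then 1 else 0))
                           \<and> (\<forall>a b. (N \<le> a \<or> N \<le> b) \<longrightarrow> h a b = 0))"

text \<open>Christoffel symbols of the Levi-Civita connection:
  \<nabla>_{\<partial>_a} \<partial>_b = \<Sum>_c christoffel N g x c a b \<partial>_c.\<close>
definition christoffel :: "nat \<Rightarrow> ((nat \<Rightarrow> real) \<Rightarrow> nat \<Rightarrow> nat \<Rightarrow> real)
    \<Rightarrow> (nat \<Rightarrow> real) \<Rightarrow> nat \<Rightarrow> nat \<Rightarrow> nat \<Rightarrow> real" where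
  "christoffel N g x c a b =
     (\<Sum>d<N. inv_metric N g x c d *
        (pd a (\<lambda>y. g y b d) x + pd b (\<lambda>y. g y a d) x - pd d (\<lambda>y. g y a b) x)) / 2"

text \<open>Components of R(\<partial>_a,\<partial>_b)\<partial>_c = \<nabla>_a\<nabla>_b\<partial>_c - \<nabla>_b\<nabla>_a\<partial>_c
  (coordinate fields commute) along \<partial>_f.\<close>
definition curv_up :: "nat \<Rightarrow> ((nat \<Rightarrow> real) \<Rightarrow> nat \<Rightarrow> nat \<Rightarrow> real)
    \<Rightarrow> (nat \<Rightarrow> real) \<Rightarrow> nat \<Rightarrow> nat \<Rightarrow> nat \<Rightarrow> nat \<Rightarrow> real" where
  "curv_up N g x a b c f =
     pd a (\<lambda>y. christoffel N g y f b c) x - pd b (\<lambda>y. christoffel N g y f a c) x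
     + (\<Sum>e<N. christoffel N g x e b c * christoffel N g x f a e
               - christoffel N g x e a c * christoffel N g x f b e)"

text \<open>R(\<partial>_a,\<partial>_b,\<partial>_c,\<partial>_d) = g(R(\<partial>_a,\<partial>_b)\<partial>_c, \<partial>_d).\<close>
definition curv :: "nat \<Rightarrow> ((nat \<Rightarrow> real) \<Rightarrow> nat \<Rightarrow> nat \<Rightarrow> real)
    \<Rightarrow> (nat \<Rightarrow> real) \<Rightarrow> nat \<Rightarrow> nat \<Rightarrow> nat \<Rightarrow> nat \<Rightarrow> real" where
  "curv N g x a b c d = (\<Sum>f<N. curv_up N g x a b c f * g x f d)"

definition nabla_curv :: "nat \<Rightarrow> ((nat \<Rightarrow> real) \<Rightarrow> nat \<Rightarrow> nat \<Rightarrow> real)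
    \<Rightarrow> (nat \<Rightarrow> real) \<Rightarrow> nat \<Rightarrow> nat \<Rightarrow> nat \<Rightarrow> nat \<Rightarrow> nat \<Rightarrow> real" where
  "nabla_curv N g x e a b c d =
     pd e (\<lambda>y. curv N g y a b c d) x
     - (\<Sum>h<N. christoffel N g x h e a * curv N g x h b c d
             + christoffel N g x h e b * curv N g x a h c d
             + christoffel N g x h e c * curv N g x a b h d
             + christoffel N g x h e d * curv N g x a b c h)"

definition locally_symmetric :: "nat \<Rightarrow> ((nat \<Rightarrow> real) \<Rightarrow> nat \<Rightarrow> nat \<Rightarrow> real) \<Rightarrow> bool" where
  "locally_symmetric N g \<longleftrightarrow>
     (\<forall>x e a b c d. e < N \<and> a < N \<and> b < N \<and> c < N \<and> d < N \<longrightarrow> nabla_curv N g x e a b c d = 0)"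

text \<open>Coordinate indices: u_i = i (0 \<le> i \<le> k), v_j = k+1+j (0 \<le> j \<le> k),
  s_i = 2k+1+i (1 \<le> i \<le> k); total dimension 3k+2.\<close>
definition uidx :: "nat \<Rightarrow> nat \<Rightarrow> nat" where "uidx k i = i"
definition vidx :: "nat \<Rightarrow> nat \<Rightarrow> nat" where "vidx k j = k + 1 + j"
definition sidx :: "nat \<Rightarrow> nat \<Rightarrow> nat" where "sidx k i = 2 * k + 1 + i"

definition gF :: "nat \<Rightarrow> (nat \<Rightarrow> real) \<Rightarrow> (nat \<Rightarrow> real \<Rightarrow> real)
    \<Rightarrow> (nat \<Rightarrow> real) \<Rightarrow> nat \<Rightarrow> nat \<Rightarrow> real" where
  "gF k eps f x a b =
     (if a = uidx k 0 \<and> 1 \<le> b \<and> b \<le> k then 2 * f b (x (uidx k b)) * x (sidx k b)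
      else if b = uidx k 0 \<and> 1 \<le> a \<and> a \<le> k then 2 * f a (x (uidx k a)) * x (sidx k a)
      else if a = b \<and> 1 \<le> a \<and> a \<le> k then - 2 * x (uidx k 0) * x (sidx k a)
      else if a \<le> k \<and> b = vidx k a then 1
      else if b \<le> k \<and> a = vidx k b then 1
      else if a = b \<and> 2 * k + 2 \<le> a \<and> a \<le> 3 * k + 1 then eps (a - (2 * k + 1))
      else 0)"

end

theory Submission
  imports Defs
begin


definition ld :: "nat \<Rightarrow> ((nat \<Rightarrow> real) \<Rightarrow> real) \<Rightarrow> (nat \<Rightarrow> real) \<Rightarrow> bool" where
  "ld a h x \<longleftrightarrow> (\<lambda>t. h (x(a := t))) field_differentiable (at (x a))"

lemma ld_D: "ld a h x \<Longrightarrow> ((\<lambda>t. h (x(a := t))) has_field_derivative pd a h x) (at (x a))"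
  unfolding ld_def pd_def using DERIV_deriv_iff_field_differentiable by blast

lemma ld_I: "((\<lambda>t. h (x(a := t))) has_field_derivative D) (at (x a)) \<Longrightarrow> ld a h x"
  unfolding ld_def field_differentiable_def by blast

lemma pd_I: "((\<lambda>t. h (x(a := t))) has_field_derivative D) (at (x a)) \<Longrightarrow> pd a h x = D"
  unfolding pd_def by (rule DERIV_imp_deriv)

lemma pd_add[simp]: "ld a g x \<Longrightarrow> ld a h x \<Longrightarrow> pd a (\<lambda>y. g y + h y) x = pd a g x + pd a h x"
  by (rule pd_I, rule DERIV_add; rule ld_D)
lemma ld_add[simp]: "ld a g x \<Longrightarrow> ld a h x \<Longrightarrow> ld a (\<lambda>y. g y + h y) x"
  by (rule ld_I, rule DERIV_add; rule ld_D)
lemma pd_diff[simp]: "ld a g x \<Longrightarrow> ld a h x \<Longrightarrow> pd a (\<lambda>y. g y - h y) x = pd a g x - pd a h x"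
  by (rule pd_I, rule DERIV_diff; rule ld_D)
lemma ld_diff[simp]: "ld a g x \<Longrightarrow> ld a h x \<Longrightarrow> ld a (\<lambda>y. g y - h y) x"
  by (rule ld_I, rule DERIV_diff; rule ld_D)
lemma pd_mult[simp]: "ld a g x \<Longrightarrow> ld a h x \<Longrightarrow> pd a (\<lambda>y. g y * h y) x = pd a g x * h x + g x * pd a h x"
proof -
  assume "ld a g x" "ld a h x"
  from DERIV_mult[OF ld_D[OF this(1)] ld_D[OF this(2)]]
  show ?thesis by (intro pd_I) (simp add: algebra_simps)
qed
lemma ld_mult[simp]: "ld a g x \<Longrightarrow> ld a h x \<Longrightarrow> ld a (\<lambda>y. g y * h y) x"
  by (rule ld_I, rule DERIV_mult; rule ld_D)
lemma pd_uminus[simp]: "ld a g x \<Longrightarrow> pd a (\<lambda>y. - g y) x = - pd a g x"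
  by (rule pd_I, rule DERIV_minus; rule ld_D)
lemma ld_uminus[simp]: "ld a g x \<Longrightarrow> ld a (\<lambda>y. - g y) x"
  by (rule ld_I, rule DERIV_minus; rule ld_D)
lemma pd_const[simp]: "pd a (\<lambda>y. c) x = 0"
  by (simp add: pd_def)
lemma ld_const[simp]: "ld a (\<lambda>y. c) x"
  by (simp add: ld_def)
lemma pd_if[simp]: "pd a (\<lambda>y. if P then g y else h y) x = (if P then pd a g x else pd a h x)"
  by simp
lemma ld_if[simp]: "ld a g x \<Longrightarrow> ld a h x \<Longrightarrow> ld a (\<lambda>y. if P then g y else h y) x"
  by (cases P) simp_all
lemma line_coord: "(\<lambda>t. \<phi> ((x(a := t)) j)) = (if a = j then \<phi> else (\<lambda>t. \<phi> (x j)))"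
  by (auto simp: fun_eq_iff)
lemma pd_coord[simp]: "pd a (\<lambda>y. y j) x = (if a = j then 1 else 0)"
  using line_coord[of "\<lambda>t. t" x a j] by (simp add: pd_def)
lemma ld_coord[simp]: "ld a (\<lambda>y. y j) x"
  using line_coord[of "\<lambda>t. t" x a j] by (simp add: ld_def)
lemma pd_comp[simp]: "\<phi> field_differentiable (at (x j)) \<Longrightarrow>
   pd a (\<lambda>y. \<phi> (y j)) x = (if a = j then deriv \<phi> (x j) else 0)"
  using line_coord[of \<phi> x a j] by (simp add: pd_def)
lemma ld_comp[simp]: "\<phi> field_differentiable (at (x j)) \<Longrightarrow> ld a (\<lambda>y. \<phi> (y j)) x"
  using line_coord[of \<phi> x a j] by (simp add: ld_def)


lemma sum_supp: "finite A \<Longrightarrow> finite P \<Longrightarrow> (\<And>h. h \<in> A \<Longrightarrow> h \<notin> P \<Longrightarrow> S h = 0) \<Longrightarrow>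
   sum S A = (\<Sum>h\<in>P. if h \<in> A then S h else 0)"
proof -
  assume A: "finite A" "finite P" "\<And>h. h \<in> A \<Longrightarrow> h \<notin> P \<Longrightarrow> S h = 0"
  have "sum S A = sum S (P \<inter> A)"
    by (rule sum.mono_neutral_right) (use A in auto)
  also have "\<dots> = (\<Sum>h\<in>P. if h \<in> A then S h else 0)"
    using sum.inter_restrict[OF A(2)] by simp
  finally show ?thesis .
qed

lemma swap_lemma: "(\<Sum>d\<in>S. (\<Sum>b\<in>S. A b * G b d) * (h d::real)) = (\<Sum>b\<in>S. A b * (\<Sum>d\<in>S. G b d * h d))"
  by (simp add: sum_distrib_left sum_distrib_right mult.assoc) (rule sum.swap)

lemma sum_delta_mult: "finite S \<Longrightarrow> (\<Sum>b\<in>S. A b * (if b = c then 1 else 0)) = (if c \<in> S then A c else (0::real))"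
  by (simp add: if_distrib sum.delta cong: if_cong)

locale wk =
  fixes k :: nat and eps :: "nat \<Rightarrow> real" and f :: "nat \<Rightarrow> real \<Rightarrow> real"
  assumes eps: "\<And>i. eps i = 1 \<or> eps i = -1"
    and fd0: "\<And>i u. f i field_differentiable (at u)"
    and fd1: "\<And>i u. deriv (f i) field_differentiable (at u)"
begin

lemma eps_sq[simp]: "eps i * eps i = 1"
  using eps[of i] by auto

lemma gF_unf: "gF k eps f x a b =
     (if a = 0 \<and> 1 \<le> b \<and> b \<le> k then 2 * f b (x b) * x (2*k+1+b)
      else if b = 0 \<and> 1 \<le> a \<and> a \<le> k then 2 * f a (x a) * x (2*k+1+a)
      else if a = b \<and> 1 \<le> a \<and> a \<le> k then - 2 * x 0 * x (2*k+1+a)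
      else if a \<le> k \<and> b = k+1+a then 1
      else if b \<le> k \<and> a = k+1+b then 1
      else if a = b \<and> 2 * k + 2 \<le> a \<and> a \<le> 3 * k + 1 then eps (a - (2 * k + 1))
      else 0)"
  by (simp add: gF_def uidx_def vidx_def sidx_def)

lemma gF_sym: "gF k eps f x a b = gF k eps f x b a"
  unfolding gF_unf by auto

definition Hinv :: "(nat \<Rightarrow> real) \<Rightarrow> nat \<Rightarrow> nat \<Rightarrow> real" where
  "Hinv x a b = (if a \<le> k \<and> b = k+1+a then 1 else if b \<le> k \<and> a = k+1+b then 1
     else if k+1 \<le> a \<and> a \<le> 2*k+1 \<and> k+1 \<le> b \<and> b \<le> 2*k+1 then - gF k eps f x (a-(k+1)) (b-(k+1))
     else if a = b \<and> 2*k+2 \<le> a \<and> a \<le> 3*k+1 then eps (a - (2*k+1)) else 0)"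

lemma Hinv_sym: "Hinv x a b = Hinv x b a"
  unfolding Hinv_def using gF_sym by auto

lemma right_inv:
  assumes "a < 3*k+2" "c < 3*k+2"
  shows "(\<Sum>b<3*k+2. gF k eps f x a b * Hinv x b c) = (if a = c then 1 else 0)"
proof -
  consider "a \<le> k" | "k+1 \<le> a \<and> a \<le> 2*k+1" | "2*k+2 \<le> a" by linarith
  then show ?thesis
  proof cases
    case 1
    have "(\<Sum>b<3*k+2. gF k eps f x a b * Hinv x b c) =
       (\<Sum>b\<in>{c-(k+1), k+1+a}. if b \<in> {..<3*k+2} then gF k eps f x a b * Hinv x b c else 0)"
      by (rule sum_supp) (use 1 in \<open>auto simp: gF_unf Hinv_def\<close>)
    also have "\<dots> = (if a = c then 1 else 0)"
      using 1 assms by (auto simp: gF_unf Hinv_def sum.insert_if)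
    finally show ?thesis .
  next
    case 2
    have "(\<Sum>b<3*k+2. gF k eps f x a b * Hinv x b c) =
       (\<Sum>b\<in>{a-(k+1)}. if b \<in> {..<3*k+2} then gF k eps f x a b * Hinv x b c else 0)"
      by (rule sum_supp) (use 2 in \<open>auto simp: gF_unf Hinv_def\<close>)
    also have "\<dots> = (if a = c then 1 else 0)"
      using 2 assms by (auto simp: gF_unf Hinv_def)
    finally show ?thesis .
  next
    case 3
    have "(\<Sum>b<3*k+2. gF k eps f x a b * Hinv x b c) =
       (\<Sum>b\<in>{a}. if b \<in> {..<3*k+2} then gF k eps f x a b * Hinv x b c else 0)"
      by (rule sum_supp) (use 3 in \<open>auto simp: gF_unf Hinv_def\<close>)
    also have "\<dots> = (if a = c then 1 else 0)"
      using 3 assms by (auto simp: gF_unf Hinv_def)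
    finally show ?thesis .
  qed
qed

lemma left_inv:
  assumes "a < 3*k+2" "c < 3*k+2"
  shows "(\<Sum>b<3*k+2. Hinv x a b * gF k eps f x b c) = (if a = c then 1 else 0)"
proof -
  have "(\<Sum>b<3*k+2. Hinv x a b * gF k eps f x b c) = (\<Sum>b<3*k+2. gF k eps f x c b * Hinv x b a)"
    by (rule sum.cong) (auto simp: Hinv_sym[of x a] gF_sym[of x _ c])
  also have "\<dots> = (if a = c then 1 else 0)" using right_inv[OF assms(2,1)] by auto
  finally show ?thesis .
qed

lemma Hinv_out: "3*k+2 \<le> a \<or> 3*k+2 \<le> b \<Longrightarrow> Hinv x a b = 0"
  unfolding Hinv_def by auto

lemma inv_eq: "inv_metric (3*k+2) (gF k eps f) x = Hinv x"
  unfolding inv_metric_def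
proof (rule the_equality)
  show "(\<forall>a<3*k+2. \<forall>c<3*k+2. (\<Sum>b<3*k+2. gF k eps f x a b * Hinv x b c) = (if a = c then 1 else 0)) \<and>
    (\<forall>a b. 3*k+2 \<le> a \<or> 3*k+2 \<le> b \<longrightarrow> Hinv x a b = 0)"
    using right_inv Hinv_out by blast
next
  fix h
  assume H: "(\<forall>a<3*k+2. \<forall>c<3*k+2. (\<Sum>b<3*k+2. gF k eps f x a b * h b c) = (if a = c then 1 else 0)) \<and>
    (\<forall>a b. 3*k+2 \<le> a \<or> 3*k+2 \<le> b \<longrightarrow> h a b = 0)"
  show "h = Hinv x"
  proof (intro ext)
    fix a c
    show "h a c = Hinv x a c"
    proof (cases "a < 3*k+2 \<and> c < 3*k+2")
      case False
      then show ?thesis using H Hinv_out by auto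
    next
      case True
      have "h a c = (\<Sum>d<3*k+2. if a = d then h d c else 0)"
        using True by (simp only: sum.delta' finite_lessThan) simp
      also have "\<dots> = (\<Sum>d<3*k+2. (\<Sum>b<3*k+2. Hinv x a b * gF k eps f x b d) * h d c)"
        by (rule sum.cong) (use True left_inv in auto)
      also have "\<dots> = (\<Sum>b<3*k+2. Hinv x a b * (\<Sum>d<3*k+2. gF k eps f x b d * h d c))"
        by (rule swap_lemma)
      also have "\<dots> = (\<Sum>b<3*k+2. Hinv x a b * (if b = c then 1 else 0))"
      proof (rule sum.cong)
        fix b assume "b \<in> {..<3*k+2}"
        then have "(\<Sum>d<3*k+2. gF k eps f x b d * h d c) = (if b = c then 1 else 0)"
          using H True by blast
        then show "Hinv x a b * (\<Sum>d<3*k+2. gF k eps f x b d * h d c) = Hinv x a b * (if b = c then 1 else 0)"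
          by (rule arg_cong)
      qed simp
      also have "\<dots> = Hinv x a c" using True by (subst sum_delta_mult) auto
      finally show ?thesis .
    qed
  qed
qed

end


declare sum.lessThan_Suc[simp del]

datatype ix = U nat | V nat | S nat

context wk begin

lemma fd0'[simp]: "f i field_differentiable (at u)" by (rule fd0)
lemma fd1'[simp]: "deriv (f i) field_differentiable (at u)" by (rule fd1)

fun enc :: "ix \<Rightarrow> nat" where
  "enc (U i) = i" | "enc (V j) = k+1+j" | "enc (S i) = 2*k+1+i"
declare enc.simps[simp del]

fun vl :: "ix \<Rightarrow> bool" where
  "vl (U i) = (i \<le> k)" | "vl (V j) = (j \<le> k)" | "vl (S i) = (1 \<le> i \<and> i \<le> k)"

lemma enc_eq[simp]: "vl a \<Longrightarrow> vl b \<Longrightarrow> (enc a = enc b) = (a = b)"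
  by (cases a; cases b) (auto simp: enc.simps)

lemma enc_lt: "vl a \<Longrightarrow> enc a < 3*k+2"
  by (cases a) (auto simp: enc.simps)

definition Ix :: "ix set" where "Ix = {a. vl a}"

lemma Ix_eq: "Ix = U ` {..k} \<union> V ` {..k} \<union> S ` {1..k}"
  unfolding Ix_def by (auto elim: vl.elims)

lemma finite_Ix[simp]: "finite Ix" unfolding Ix_eq by simp

lemma enc_bij: "bij_betw enc Ix {..<3*k+2}"
proof (rule bij_betw_imageI)
  show "inj_on enc Ix" by (rule inj_onI) (simp add: Ix_def)
  show "enc ` Ix = {..<3*k+2}"
  proof
    show "enc ` Ix \<subseteq> {..<3*k+2}" using enc_lt by (auto simp: Ix_def)
    show "{..<3*k+2} \<subseteq> enc ` Ix"
    proof
      fix n assume "n \<in> {..<3*k+2}"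
      then have n: "n < 3*k+2" by simp
      consider "n \<le> k" | "k < n \<and> n \<le> 2*k+1" | "2*k+1 < n" by linarith
      then show "n \<in> enc ` Ix"
      proof cases
        case 1 then show ?thesis by (intro image_eqI[of _ _ "U n"]) (auto simp: Ix_def enc.simps)
      next
        case 2 then show ?thesis by (intro image_eqI[of _ _ "V (n - (k+1))"]) (auto simp: Ix_def enc.simps)
      next
        case 3 then show ?thesis using n by (intro image_eqI[of _ _ "S (n - (2*k+1))"]) (auto simp: Ix_def enc.simps)
      qed
    qed
  qed
qed

lemma sum_enc: "(\<Sum>n<3*k+2. F n) = (\<Sum>a\<in>Ix. F (enc a))"
  using sum.reindex_bij_betw[OF enc_bij, of F] by simp

lemma sum_Ix_supp: "finite P \<Longrightarrow> (\<And>h. vl h \<Longrightarrow> h \<notin> P \<Longrightarrow> T h = 0) \<Longrightarrow>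
   (\<Sum>h\<in>Ix. T h) = (\<Sum>h\<in>P. if vl h then T h else 0)"
proof -
  assume a: "finite P" "\<And>h. vl h \<Longrightarrow> h \<notin> P \<Longrightarrow> T h = 0"
  have "(\<Sum>h\<in>Ix. T h) = (\<Sum>h\<in>P. if h \<in> Ix then T h else 0)"
    by (rule sum_supp[OF finite_Ix a(1)]) (use a(2) in \<open>auto simp: Ix_def\<close>)
  then show ?thesis by (simp add: Ix_def)
qed

fun G :: "(nat \<Rightarrow> real) \<Rightarrow> ix \<Rightarrow> ix \<Rightarrow> real" where
  "G y (U i) (U j) = (if i = 0 \<and> j \<noteq> 0 then 2 * f j (y (enc (U j))) * y (enc (S j))
      else if j = 0 \<and> i \<noteq> 0 then 2 * f i (y (enc (U i))) * y (enc (S i))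
      else if i = j \<and> i \<noteq> 0 then - 2 * y (enc (U 0)) * y (enc (S i)) else 0)"
| "G y (U i) (V j) = (if i = j then 1 else 0)"
| "G y (V i) (U j) = (if i = j then 1 else 0)"
| "G y (S i) (S j) = (if i = j then eps i else 0)"
| "G y _ _ = 0"

lemma gF_enc: "vl a \<Longrightarrow> vl b \<Longrightarrow> gF k eps f y (enc a) (enc b) = G y a b"
  by (cases a; cases b) (auto simp: gF_unf enc.simps)

fun Hi :: "(nat \<Rightarrow> real) \<Rightarrow> ix \<Rightarrow> ix \<Rightarrow> real" where
  "Hi y (U i) (V j) = (if i = j then 1 else 0)"
| "Hi y (V i) (U j) = (if i = j then 1 else 0)"
| "Hi y (V i) (V j) = - G y (U i) (U j)"
| "Hi y (S i) (S j) = (if i = j then eps i else 0)"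
| "Hi y _ _ = 0"

lemma Hinv_enc: "vl a \<Longrightarrow> vl b \<Longrightarrow> Hinv x (enc a) (enc b) = Hi x a b"
proof (cases a; cases b)
  fix i j assume "a = V i" "b = V j" "vl a" "vl b"
  then show ?thesis using gF_enc[of "U i" "U j" x] by (auto simp: Hinv_def enc.simps)
qed (auto simp: Hinv_def enc.simps)

fun DG :: "(nat \<Rightarrow> real) \<Rightarrow> ix \<Rightarrow> ix \<Rightarrow> ix \<Rightarrow> real" where
  "DG x e (U i) (U j) = (if i = 0 \<and> j \<noteq> 0 then
        2 * (if e = U j then deriv (f j) (x (enc (U j))) else 0) * x (enc (S j)) + 2 * f j (x (enc (U j))) * (if e = S j then 1 else 0)
      else if j = 0 \<and> i \<noteq> 0 then
        2 * (if e = U i then deriv (f i) (x (enc (U i))) else 0) * x (enc (S i)) + 2 * f i (x (enc (U i))) * (if e = S i then 1 else 0)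
      else if i = j \<and> i \<noteq> 0 then
        - 2 * ((if e = U 0 then 1 else 0) * x (enc (S i)) + x (enc (U 0)) * (if e = S i then 1 else 0))
      else 0)"
| "DG x e _ _ = 0"

lemma pd_G: "vl e \<Longrightarrow> vl a \<Longrightarrow> vl b \<Longrightarrow> pd (enc e) (\<lambda>y. gF k eps f y (enc a) (enc b)) x = DG x e a b"
proof -
  assume v: "vl e" "vl a" "vl b"
  have "(\<lambda>y. gF k eps f y (enc a) (enc b)) = (\<lambda>y. G y a b)" using v by (simp add: gF_enc)
  then show ?thesis using v by (cases a; cases b) (auto simp: algebra_simps)
qed

fun Lc :: "(nat \<Rightarrow> real) \<Rightarrow> ix \<Rightarrow> ix \<Rightarrow> ix \<Rightarrow> real" where
  "Lc y (U i) (U j) (U l) = (if i = 0 \<and> j \<noteq> 0 \<and> l = j then - y (enc (S j))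
      else if j = 0 \<and> i \<noteq> 0 \<and> l = i then - y (enc (S i))
      else if i = j \<and> i \<noteq> 0 \<and> l = 0 then y (enc (S i)) * (2 * deriv (f i) (y (enc (U i))) + 1) else 0)"
| "Lc y (U i) (U j) (S l) = (if i = 0 \<and> j = l then - f l (y (enc (U l)))
      else if j = 0 \<and> i = l then - f l (y (enc (U l)))
      else if i = j \<and> i = l then y (enc (U 0)) else 0)"
| "Lc y (U i) (S j) (U l) = (if i = 0 \<and> l = j then f j (y (enc (U j)))
      else if i = j \<and> l = 0 then f j (y (enc (U j)))
      else if i = j \<and> l = j then - y (enc (U 0)) else 0)"
| "Lc y (S j) (U i) (U l) = (if i = 0 \<and> l = j then f j (y (enc (U j)))
      else if i = j \<and> l = 0 then f j (y (enc (U j)))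
      else if i = j \<and> l = j then - y (enc (U 0)) else 0)"
| "Lc y _ _ _ = 0"

lemma Lc_V[simp]: "Lc y a b (V m) = 0" "Lc y a (V m) d = 0" "Lc y (V m) b d = 0"
  by (cases a; cases b; cases d; simp)+

lemma Lc_DG: "vl a \<Longrightarrow> vl b \<Longrightarrow> vl d \<Longrightarrow> DG x a b d + DG x b a d - DG x d a b = 2 * Lc x a b d"
  by (cases a; cases b; cases d) (auto simp: algebra_simps)

definition Gam :: "(nat \<Rightarrow> real) \<Rightarrow> ix \<Rightarrow> ix \<Rightarrow> ix \<Rightarrow> real" where
  "Gam x c a b = (case c of U _ \<Rightarrow> 0 | V i \<Rightarrow> Lc x a b (U i) | S i \<Rightarrow> eps i * Lc x a b (S i))"

lemma chr_enc: "vl c \<Longrightarrow> vl a \<Longrightarrow> vl b \<Longrightarrow> christoffel (3*k+2) (gF k eps f) x (enc c) (enc a) (enc b) = Gam x c a b"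
proof -
  assume v: "vl c" "vl a" "vl b"
  have "christoffel (3*k+2) (gF k eps f) x (enc c) (enc a) (enc b) =
     (\<Sum>d\<in>Ix. Hinv x (enc c) (enc d) * (pd (enc a) (\<lambda>y. gF k eps f y (enc b) (enc d)) x
        + pd (enc b) (\<lambda>y. gF k eps f y (enc a) (enc d)) x - pd (enc d) (\<lambda>y. gF k eps f y (enc a) (enc b)) x)) / 2"
    unfolding christoffel_def inv_eq sum_enc ..
  also have "\<dots> = (\<Sum>d\<in>Ix. Hi x c d * (2 * Lc x a b d)) / 2"
    by (intro arg_cong[where f="\<lambda>t. t / 2"] sum.cong refl) (use v in \<open>simp add: Ix_def pd_G Hinv_enc Lc_DG\<close>)
  also have "\<dots> = Gam x c a b"
  proof (cases c)
    case (U i)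
    have "(\<Sum>d\<in>Ix. Hi x c d * (2 * Lc x a b d)) = (\<Sum>d\<in>{}. if vl d then Hi x c d * (2 * Lc x a b d) else 0)"
    proof (rule sum_Ix_supp)
      fix h show "vl h \<Longrightarrow> h \<notin> {} \<Longrightarrow> Hi x c h * (2 * Lc x a b h) = 0" by (cases h) (auto simp: U)
    qed simp
    then show ?thesis by (simp add: Gam_def U)
  next
    case (V i)
    have "(\<Sum>d\<in>Ix. Hi x c d * (2 * Lc x a b d)) = (\<Sum>d\<in>{U i}. if vl d then Hi x c d * (2 * Lc x a b d) else 0)"
    proof (rule sum_Ix_supp)
      fix h show "vl h \<Longrightarrow> h \<notin> {U i} \<Longrightarrow> Hi x c h * (2 * Lc x a b h) = 0" by (cases h) (auto simp: V)
    qed simp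
    then show ?thesis using v by (simp add: Gam_def V)
  next
    case (S i)
    have "(\<Sum>d\<in>Ix. Hi x c d * (2 * Lc x a b d)) = (\<Sum>d\<in>{S i}. if vl d then Hi x c d * (2 * Lc x a b d) else 0)"
    proof (rule sum_Ix_supp)
      fix h show "vl h \<Longrightarrow> h \<notin> {S i} \<Longrightarrow> Hi x c h * (2 * Lc x a b h) = 0" by (cases h) (auto simp: S)
    qed simp
    then show ?thesis using v by (simp add: Gam_def S)
  qed
  finally show ?thesis .
qed

end


context wk begin

fun GQ :: "(nat \<Rightarrow> real) \<Rightarrow> ix \<Rightarrow> ix \<Rightarrow> (ix \<Rightarrow> real) \<Rightarrow> real" where
  "GQ x (U i) (U j) Q = (if i = 0 \<and> j \<noteq> 0 then - eps j * f j (x (enc (U j))) * Q (S j)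
      else if j = 0 \<and> i \<noteq> 0 then - eps i * f i (x (enc (U i))) * Q (S i)
      else if i = j \<and> i \<noteq> 0 then eps i * x (enc (U 0)) * Q (S i) else 0)"
| "GQ x _ _ Q = 0"

lemma sum_GQ: "(\<And>m. Q (V m) = 0) \<Longrightarrow> vl b \<Longrightarrow> vl c \<Longrightarrow> (\<Sum>e\<in>Ix. Gam x e b c * Q e) = GQ x b c Q"
proof -
  assume Q: "\<And>m. Q (V m) = 0" and v: "vl b" "vl c"
  show ?thesis
  proof (cases "\<exists>i j. b = U i \<and> c = U j")
    case True
    then obtain i j where ij: "b = U i" "c = U j" by blast
    have "(\<Sum>e\<in>Ix. Gam x e b c * Q e) = (\<Sum>e\<in>{S (max i j)}. if vl e then Gam x e b c * Q e else 0)"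
    proof (rule sum_Ix_supp)
      fix h show "vl h \<Longrightarrow> h \<notin> {S (max i j)} \<Longrightarrow> Gam x h b c * Q h = 0"
        by (cases h) (auto simp: ij Gam_def Q)
    qed simp
    then show ?thesis using v by (auto simp: ij Gam_def max_def)
  next
    case False
    have "(\<Sum>e\<in>Ix. Gam x e b c * Q e) = (\<Sum>e\<in>{}. if vl e then Gam x e b c * Q e else 0)"
    proof (rule sum_Ix_supp)
      fix h show "vl h \<Longrightarrow> h \<notin> {} \<Longrightarrow> Gam x h b c * Q h = 0"
        using False by (cases h; cases b; cases c) (auto simp: Gam_def Q)
    qed simp
    then show ?thesis using False by (cases b; cases c) auto
  qed
qed

lemma Gam_V[simp]: "Gam x c a (V m) = 0"
  by (cases c) (auto simp: Gam_def)

lemma cu_enc: "vl a \<Longrightarrow> vl b \<Longrightarrow> vl c \<Longrightarrow> vl f' \<Longrightarrow>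
  curv_up (3*k+2) (gF k eps f) x (enc a) (enc b) (enc c) (enc f') =
    pd (enc a) (\<lambda>y. Gam y f' b c) x - pd (enc b) (\<lambda>y. Gam y f' a c) x
    + GQ x b c (\<lambda>e. Gam x f' a e) - GQ x a c (\<lambda>e. Gam x f' b e)"
proof -
  assume v: "vl a" "vl b" "vl c" "vl f'"
  have "curv_up (3*k+2) (gF k eps f) x (enc a) (enc b) (enc c) (enc f') =
    pd (enc a) (\<lambda>y. Gam y f' b c) x - pd (enc b) (\<lambda>y. Gam y f' a c) x
    + (\<Sum>e\<in>Ix. Gam x e b c * Gam x f' a e - Gam x e a c * Gam x f' b e)"
    unfolding curv_up_def sum_enc using v
    by (intro arg_cong2[where f="(+)"] arg_cong2[where f="(-)"] sum.cong refl)
       (simp_all only: chr_enc Ix_def mem_Collect_eq)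
  also have "(\<Sum>e\<in>Ix. Gam x e b c * Gam x f' a e - Gam x e a c * Gam x f' b e) =
      GQ x b c (\<lambda>e. Gam x f' a e) - GQ x a c (\<lambda>e. Gam x f' b e)"
    using v by (simp add: sum_subtractf sum_GQ)
  finally show ?thesis by simp
qed

fun W1 :: "(nat \<Rightarrow> real) \<Rightarrow> nat \<Rightarrow> ix \<Rightarrow> ix \<Rightarrow> real" where
  "W1 x i (U j) (V l) = (if j = i \<and> l = 0 then eps i * (f i (x (enc (U i))))^2
     else if j = 0 \<and> l = i then - eps i * (f i (x (enc (U i))))^2 else 0)"
| "W1 x i (U j) (S l) = (if j = i \<and> l = i then eps i * (1 + deriv (f i) (x (enc (U i)))) else 0)"
| "W1 x i (S j) (V l) = (if j = i \<and> l = i then - (1 + deriv (f i) (x (enc (U i)))) else 0)"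
| "W1 x i _ _ = 0"

fun W2 :: "(nat \<Rightarrow> real) \<Rightarrow> nat \<Rightarrow> ix \<Rightarrow> ix \<Rightarrow> real" where
  "W2 x i (U j) (V l) = (if j = 0 \<and> l = i then 1 + deriv (f i) (x (enc (U i)))
     else if j = i \<and> l = 0 then - (1 + deriv (f i) (x (enc (U i)))) else 0)"
| "W2 x i _ _ = 0"

fun Rup :: "(nat \<Rightarrow> real) \<Rightarrow> ix \<Rightarrow> ix \<Rightarrow> ix \<Rightarrow> ix \<Rightarrow> real" where
  "Rup x (U i) (U j) c d = (if i = 0 \<and> j \<noteq> 0 then W1 x j c d else if j = 0 \<and> i \<noteq> 0 then - W1 x i c d else 0)"
| "Rup x (U i) (S j) c d = (if i = j then W2 x j c d else 0)"
| "Rup x (S j) (U i) c d = (if i = j then - W2 x j c d else 0)"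
| "Rup x _ _ c d = 0"

lemma cu_Rup: "vl a \<Longrightarrow> vl b \<Longrightarrow> vl c \<Longrightarrow> vl d \<Longrightarrow>
  curv_up (3*k+2) (gF k eps f) x (enc a) (enc b) (enc c) (enc d) = Rup x a b c d"
  unfolding cu_enc
  by (cases a; cases b; cases c; cases d) (auto simp: Gam_def algebra_simps power2_eq_square)

lemma Rup_U[simp]: "Rup x a b c (U m) = 0"
  by (cases a; cases b; cases c) auto

lemma sum_RG: "(\<And>m. Q (U m) = 0) \<Longrightarrow> vl d \<Longrightarrow>
   (\<Sum>h\<in>Ix. Q h * G x h d) = (case d of U l \<Rightarrow> Q (V l) | V l \<Rightarrow> 0 | S l \<Rightarrow> Q (S l) * eps l)"
proof -
  assume Q: "\<And>m. Q (U m) = 0" and v: "vl d"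
  show ?thesis
  proof (cases d)
    case (U l)
    have "(\<Sum>h\<in>Ix. Q h * G x h d) = (\<Sum>h\<in>{V l}. if vl h then Q h * G x h d else 0)"
    proof (rule sum_Ix_supp)
      fix h show "vl h \<Longrightarrow> h \<notin> {V l} \<Longrightarrow> Q h * G x h d = 0" by (cases h) (auto simp: U Q)
    qed simp
    then show ?thesis using v by (simp add: U)
  next
    case (V l)
    have "(\<Sum>h\<in>Ix. Q h * G x h d) = (\<Sum>h\<in>{}. if vl h then Q h * G x h d else 0)"
    proof (rule sum_Ix_supp)
      fix h show "vl h \<Longrightarrow> h \<notin> {} \<Longrightarrow> Q h * G x h d = 0" by (cases h) (auto simp: V Q)
    qed simp
    then show ?thesis using v by (simp add: V)
  next
    case (S l)
    have "(\<Sum>h\<in>Ix. Q h * G x h d) = (\<Sum>h\<in>{S l}. if vl h then Q h * G x h d else 0)"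
    proof (rule sum_Ix_supp)
      fix h show "vl h \<Longrightarrow> h \<notin> {S l} \<Longrightarrow> Q h * G x h d = 0" by (cases h) (auto simp: S Q)
    qed simp
    then show ?thesis using v by (simp add: S)
  qed
qed

definition Rl :: "(nat \<Rightarrow> real) \<Rightarrow> ix \<Rightarrow> ix \<Rightarrow> ix \<Rightarrow> ix \<Rightarrow> real" where
  "Rl x a b c d = (case d of U l \<Rightarrow> Rup x a b c (V l) | V l \<Rightarrow> 0 | S l \<Rightarrow> Rup x a b c (S l) * eps l)"

lemma curv_enc: "vl a \<Longrightarrow> vl b \<Longrightarrow> vl c \<Longrightarrow> vl d \<Longrightarrow>
  curv (3*k+2) (gF k eps f) x (enc a) (enc b) (enc c) (enc d) = Rl x a b c d"
proof -
  assume v: "vl a" "vl b" "vl c" "vl d"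
  have "curv (3*k+2) (gF k eps f) x (enc a) (enc b) (enc c) (enc d) = (\<Sum>h\<in>Ix. Rup x a b c h * G x h d)"
    unfolding curv_def sum_enc using v
    by (intro sum.cong refl) (simp_all only: cu_Rup gF_enc Ix_def mem_Collect_eq)
  also have "\<dots> = Rl x a b c d" using v by (simp add: sum_RG Rl_def)
  finally show ?thesis .
qed

lemma Rl_V[simp]: "Rl x (V m) b c d = 0" "Rl x a (V m) c d = 0" "Rl x a b (V m) d = 0" "Rl x a b c (V m) = 0"
  by (cases a; cases b; cases c; cases d; simp add: Rl_def)+

lemma nc_enc: "vl e \<Longrightarrow> vl a \<Longrightarrow> vl b \<Longrightarrow> vl c \<Longrightarrow> vl d \<Longrightarrow>
  nabla_curv (3*k+2) (gF k eps f) x (enc e) (enc a) (enc b) (enc c) (enc d) =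
   pd (enc e) (\<lambda>y. Rl y a b c d) x - (GQ x e a (\<lambda>h. Rl x h b c d) + GQ x e b (\<lambda>h. Rl x a h c d)
     + GQ x e c (\<lambda>h. Rl x a b h d) + GQ x e d (\<lambda>h. Rl x a b c h))"
proof -
  assume v: "vl e" "vl a" "vl b" "vl c" "vl d"
  have "nabla_curv (3*k+2) (gF k eps f) x (enc e) (enc a) (enc b) (enc c) (enc d) =
    pd (enc e) (\<lambda>y. Rl y a b c d) x - (\<Sum>h\<in>Ix. Gam x h e a * Rl x h b c d + Gam x h e b * Rl x a h c d
     + Gam x h e c * Rl x a b h d + Gam x h e d * Rl x a b c h)"
    unfolding nabla_curv_def sum_enc using v
    by (intro arg_cong2[where f="(-)"] sum.cong refl) (simp_all only: curv_enc chr_enc Ix_def mem_Collect_eq)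
  also have "(\<Sum>h\<in>Ix. Gam x h e a * Rl x h b c d + Gam x h e b * Rl x a h c d
     + Gam x h e c * Rl x a b h d + Gam x h e d * Rl x a b c h) =
     GQ x e a (\<lambda>h. Rl x h b c d) + GQ x e b (\<lambda>h. Rl x a h c d)
     + GQ x e c (\<lambda>h. Rl x a b h d) + GQ x e d (\<lambda>h. Rl x a b c h)"
    using v by (simp add: sum.distrib sum_GQ)
  finally show ?thesis .
qed

end


context wk begin

lemma eps_sq2[simp]: "eps i * (eps i * z) = z"
  by (simp add: mult.assoc[symmetric])

fun Pp :: "nat \<Rightarrow> ix \<Rightarrow> ix \<Rightarrow> real" where
  "Pp j (U i) (U l) = (if i = 0 \<and> l = j then 1 else if i = j \<and> l = 0 then -1 else 0)"
| "Pp j _ _ = 0"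

fun Qq :: "nat \<Rightarrow> ix \<Rightarrow> ix \<Rightarrow> real" where
  "Qq j (U i) (S l) = (if i = j \<and> l = j then 1 else 0)"
| "Qq j (S l) (U i) = (if i = j \<and> l = j then -1 else 0)"
| "Qq j _ _ = 0"

definition NCx :: "(nat \<Rightarrow> real) \<Rightarrow> ix \<Rightarrow> ix \<Rightarrow> ix \<Rightarrow> ix \<Rightarrow> ix \<Rightarrow> real" where
  "NCx x e a b c d = (case e of U j \<Rightarrow> if j = 0 then 0 else
     - 2 * eps j * f j (x (enc (U j))) * (1 + 2 * deriv (f j) (x (enc (U j)))) * Pp j a b * Pp j c d
     + deriv (deriv (f j)) (x (enc (U j))) * (Pp j a b * Qq j c d + Qq j a b * Pp j c d)
   | _ \<Rightarrow> 0)"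

lemma nc_NCx: "vl e \<Longrightarrow> vl a \<Longrightarrow> vl b \<Longrightarrow> vl c \<Longrightarrow> vl d \<Longrightarrow>
  nabla_curv (3*k+2) (gF k eps f) x (enc e) (enc a) (enc b) (enc c) (enc d) = NCx x e a b c d"
  unfolding nc_enc
  by (cases e; cases a; cases b; cases c; cases d) (auto simp: Rl_def NCx_def algebra_simps power2_eq_square)

end


lemma fpp_zero:
  fixes g :: "real \<Rightarrow> real"
  assumes d0: "\<And>u. g field_differentiable (at u)" and d1: "\<And>u. deriv g field_differentiable (at u)"
    and h: "\<And>u. g u = 0 \<or> deriv g u = -1/2"
  shows "deriv (deriv g) u = 0"
proof -
  have Dv: "deriv g v = 0 \<or> deriv g v = -1/2" for v
  proof (cases "g v = 0")
    case False then show ?thesis using h by auto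
  next
    case True
    have "((\<lambda>t. g t * (1 + 2 * deriv g t)) has_real_derivative
        (deriv g v * (1 + 2 * deriv g v) + g v * (2 * deriv (deriv g) v))) (at v)"
      using d0[of v] d1[of v] unfolding DERIV_deriv_iff_field_differentiable[symmetric]
      by (auto intro!: derivative_eq_intros simp: algebra_simps)
    moreover have "(\<lambda>t. g t * (1 + 2 * deriv g t)) = (\<lambda>t. 0)"
    proof (rule ext)
      fix t show "g t * (1 + 2 * deriv g t) = 0" using h[of t] by auto
    qed
    ultimately have "deriv g v * (1 + 2 * deriv g v) + g v * (2 * deriv (deriv g) v) = 0"
      by (metis DERIV_unique DERIV_const)
    then have "deriv g v * (1 + 2 * deriv g v) = 0" using True by simp
    then show ?thesis by auto
  qed
  have cont: "continuous_on A (deriv g)" for A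
    by (intro continuous_at_imp_continuous_on ballI field_differentiable_imp_continuous_at d1)
  have const: "deriv g a = deriv g b" if ab: "a \<le> b" for a b
  proof (rule ccontr)
    assume ne: "deriv g a \<noteq> deriv g b"
    have "\<exists>z. a \<le> z \<and> z \<le> b \<and> deriv g z = -1/4"
    proof (cases "deriv g a = 0")
      case True
      then have "deriv g b = -1/2" using ne Dv[of b] by auto
      then show ?thesis using True ab cont by (intro IVT2') auto
    next
      case False
      then have "deriv g a = -1/2" "deriv g b = 0" using ne Dv[of a] Dv[of b] by auto
      then show ?thesis using ab cont by (intro IVT') auto
    qed
    then obtain z where "deriv g z = -1/4" by blast
    then show False using Dv[of z] by auto
  qed
  have "deriv g = (\<lambda>_. deriv g 0)"
  proof
    fix v show "deriv g v = deriv g 0"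
      using const[of v 0] const[of 0 v] by (cases "v \<le> 0") auto
  qed
  then obtain c where "deriv g = (\<lambda>_. c)" by blast
  then show ?thesis by simp
qed

lemma diff_to_fd: "(g::real\<Rightarrow>real) differentiable (at u) \<Longrightarrow> g field_differentiable (at u)"
  by (simp add: field_differentiable_def real_differentiable_def)

theorem lemma2p1:
  fixes k :: nat and eps :: "nat \<Rightarrow> real" and f :: "nat \<Rightarrow> real \<Rightarrow> real"
  assumes "k \<ge> 1"
    and "\<forall>i\<in>{1..k}. eps i = 1 \<or> eps i = -1"
    and "\<forall>i\<in>{1..k}. smooth_fun (f i)"
  shows "locally_symmetric (3 * k + 2) (gF k eps f) \<longleftrightarrow>
         (\<forall>i\<in>{1..k}. \<forall>u. f i u = 0 \<or> deriv (f i) u = - 1 / 2)"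
proof -
  define f0 where "f0 = (\<lambda>i. if i \<in> {1..k} then f i else (\<lambda>_::real. 0::real))"
  define eps0 where "eps0 = (\<lambda>i. if i \<in> {1..k} then eps i else 1)"
  have gq: "gF k eps f = gF k eps0 f0"
    by (auto simp: fun_eq_iff gF_def f0_def eps0_def uidx_def vidx_def sidx_def)
  have sm0: "f i field_differentiable (at u)" "deriv (f i) field_differentiable (at u)" if "i \<in> {1..k}" for i u
  proof -
    have "smooth_fun (f i)" using assms(3) that by blast
    then have "((deriv ^^ 0) (f i)) differentiable (at u)" "((deriv ^^ 1) (f i)) differentiable (at u)"
      unfolding smooth_fun_def by blast+
    then show "f i field_differentiable (at u)" "deriv (f i) field_differentiable (at u)"
      by (simp_all add: diff_to_fd)
  qed
  interpret W: wk k eps0 f0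
  proof
    show "eps0 i = 1 \<or> eps0 i = -1" for i using assms(2) by (auto simp: eps0_def)
    show "f0 i field_differentiable (at u)" for i u using sm0 by (auto simp: f0_def)
    show "deriv (f0 i) field_differentiable (at u)" for i u using sm0 by (auto simp: f0_def)
  qed
  have LS: "locally_symmetric (3 * k + 2) (gF k eps f) \<longleftrightarrow>
      (\<forall>x e a b c d. W.vl e \<and> W.vl a \<and> W.vl b \<and> W.vl c \<and> W.vl d \<longrightarrow> W.NCx x e a b c d = 0)"
  proof
    assume L: "locally_symmetric (3 * k + 2) (gF k eps f)"
    show "\<forall>x e a b c d. W.vl e \<and> W.vl a \<and> W.vl b \<and> W.vl c \<and> W.vl d \<longrightarrow> W.NCx x e a b c d = 0"
    proof (intro allI impI)
      fix x e a b c d assume v: "W.vl e \<and> W.vl a \<and> W.vl b \<and> W.vl c \<and> W.vl d"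
      then have "nabla_curv (3*k+2) (gF k eps0 f0) x (W.enc e) (W.enc a) (W.enc b) (W.enc c) (W.enc d) = 0"
        using L W.enc_lt unfolding locally_symmetric_def gq by blast
      then show "W.NCx x e a b c d = 0" using v W.nc_NCx by simp
    qed
  next
    assume N: "\<forall>x e a b c d. W.vl e \<and> W.vl a \<and> W.vl b \<and> W.vl c \<and> W.vl d \<longrightarrow> W.NCx x e a b c d = 0"
    have surj: "\<exists>a'. W.vl a' \<and> n = W.enc a'" if "n < 3*k+2" for n
      using W.enc_bij that unfolding bij_betw_def W.Ix_def by auto
    show "locally_symmetric (3 * k + 2) (gF k eps f)"
      unfolding locally_symmetric_def gq
    proof (intro allI impI)
      fix x e a b c d assume "e < 3*k+2 \<and> a < 3*k+2 \<and> b < 3*k+2 \<and> c < 3*k+2 \<and> d < 3*k+2"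
      then obtain e' a' b' c' d' where "W.vl e'" "W.vl a'" "W.vl b'" "W.vl c'" "W.vl d'"
        "e = W.enc e'" "a = W.enc a'" "b = W.enc b'" "c = W.enc c'" "d = W.enc d'"
        using surj by meson
      then show "nabla_curv (3*k+2) (gF k eps0 f0) x e a b c d = 0"
        using N W.nc_NCx by simp
    qed
  qed
  show ?thesis
  proof
    assume L: "locally_symmetric (3 * k + 2) (gF k eps f)"
    show "\<forall>i\<in>{1..k}. \<forall>u. f i u = 0 \<or> deriv (f i) u = - 1 / 2"
    proof (intro ballI allI)
      fix i u assume i: "i \<in> {1..k}"
      have "W.NCx (\<lambda>_. u) (U i) (U 0) (U i) (U i) (U 0) = 0"
        using L LS i by auto
      then have "2 * eps0 i * (f0 i u * (1 + 2 * deriv (f0 i) u)) = 0"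
        using i by (simp add: W.NCx_def algebra_simps)
      moreover have "eps0 i \<noteq> 0" using W.eps[of i] by auto
      ultimately have "f0 i u = 0 \<or> 1 + 2 * deriv (f0 i) u = 0" by simp
      then show "f i u = 0 \<or> deriv (f i) u = - 1 / 2" using i by (auto simp: f0_def)
    qed
  next
    assume C: "\<forall>i\<in>{1..k}. \<forall>u. f i u = 0 \<or> deriv (f i) u = - 1 / 2"
    have C0: "f0 j u = 0 \<or> deriv (f0 j) u = - 1 / 2" if "j \<in> {1..k}" for j u
      using C that by (auto simp: f0_def)
    have C2: "deriv (deriv (f0 j)) u = 0" if "j \<in> {1..k}" for j u
      using fpp_zero[of "f0 j"] C0[OF that] W.fd0 W.fd1 by auto
    have "W.NCx x e a b c d = 0" if v: "W.vl e" for x e a b c d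
    proof (cases e)
      case (U j)
      show ?thesis
      proof (cases "j = 0")
        case True then show ?thesis by (simp add: W.NCx_def U)
      next
        case False
        then have j: "j \<in> {1..k}" using v U by auto
        from C0[OF j, of "x (W.enc (U j))"] show ?thesis
          using C2[OF j] by (auto simp: W.NCx_def U)
      qed
    qed (simp_all add: W.NCx_def)
    then show "locally_symmetric (3 * k + 2) (gF k eps f)" using LS by blast
  qed
qed


end
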